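(* Let $w$ be a non-empty word in $0,1,2$. The four-dimensional sequential function $f^{(1)}_w(z)$ (i.e. the defining integral) is well defined (convergent) if and only if $w$ begins with the letter $2$.
   Context: For a word $w=a_1\cdots a_n$ in the letters $0,1,2$, the sequential graph $G_w$ has vertices $0,1,v_1,\dots,v_n$, edges $v_iv_{i+1}$ ($1\le i<n$), and for each $i$ an edge $v_i0$ if $a_i=0$, an edge $v_i1$ if $a_i=1$, and both edges $v_i0,v_i1$ if $a_i=2$. The sequential function $f^{(1)}_w$ is the graphical function in $d=4$ of the graph obtained from $G_w$ by adding a vertex $z$ and an edge $v_nz$: $f^{(1)}_w(z)=\prod_{i=1}^n\int_{\mathbb{R}^4}\frac{d^4x_{v_i}}{\pi^2}\prod_e\|x_e-y_e\|^{-2}$, product over edges, with $0$ the origin, $1$ a unit vector $e_1$, $z\in\mathbb{R}^4\setminus\{0,e_1\}$. *)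

theory Defs
  imports "HOL-Analysis.Analysis"
begin

datatype letter = L0 | L1 | L2

text \<open>The external vertex 1: the unit vector e_1 in R^4.\<close>
definition e1 :: "real^4" where
  "e1 = axis 1 1"

definition propagator :: "real^4 \<Rightarrow> real^4 \<Rightarrow> real" where
  "propagator a b = 1 / (norm (a - b))^2"

text \<open>Weight of the edges from v_i to the external vertices 0 and 1 determined by the letter a_i.\<close>
fun letter_weight :: "letter \<Rightarrow> real^4 \<Rightarrow> real" where
  "letter_weight L0 x = propagator x 0"
| "letter_weight L1 x = propagator x e1"
| "letter_weight L2 x = propagator x 0 * propagator x e1"

text \<open>Integrand of the sequential function f^(1)_w(z). The internal vertex v_(i+1) has
  position x i (i < n), the edges are v_i v_(i+1), the letter edges and v_n z.\<close>
definition seq_integrand :: "letter list \<Rightarrow> real^4 \<Rightarrow> (nat \<Rightarrow> real^4) \<Rightarrow> real" where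
  "seq_integrand w z x =
     (\<Prod>i<length w. letter_weight (w ! i) (x i))
   * (\<Prod>i<length w - 1. propagator (x i) (x (Suc i)))
   * propagator (x (length w - 1)) z
   / pi ^ (2 * length w)"

text \<open>The defining integral over (R^4)^n (nonnegative integrand, hence a Lebesgue integral
  in [0, \<infinity>]).\<close>
definition seq_integral :: "letter list \<Rightarrow> real^4 \<Rightarrow> ennreal" where
  "seq_integral w z =
     (\<integral>\<^sup>+ x. ennreal (seq_integrand w z x) \<partial>(PiM {..<length w} (\<lambda>_. (lborel :: (real^4) measure))))"

definition seq_well_defined :: "letter list \<Rightarrow> real^4 \<Rightarrow> bool" where
  "seq_well_defined w z \<longleftrightarrow> seq_integral w z < \<infinity>"

end

theory Submission
  imports Defs
begin


lemma nn_integral_affine4: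
  fixes f :: "real^4 \<Rightarrow> ennreal" and c :: real
  assumes [measurable]: "f \<in> borel_measurable borel" and c: "c \<noteq> 0"
  shows "(\<integral>\<^sup>+x. f x \<partial>lborel) = ennreal (\<bar>c\<bar>^4) * (\<integral>\<^sup>+x. f (t + c *\<^sub>R x) \<partial>lborel)"
  by (subst lborel_affine[OF c, of t]) (simp add: nn_integral_density nn_integral_distr nn_integral_cmult)

lemma nn_integral_shift4:
  fixes f :: "real^4 \<Rightarrow> ennreal"
  assumes [measurable]: "f \<in> borel_measurable borel"
  shows "(\<integral>\<^sup>+x. f x \<partial>lborel) = (\<integral>\<^sup>+x. f (t + x) \<partial>lborel)"
  using nn_integral_affine4[OF assms, of 1 t] by simp

definition iv :: "nat \<Rightarrow> real^4 \<Rightarrow> real" where "iv k x = inverse (norm x ^ k)"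

lemma iv_nonneg[simp]: "iv k x \<ge> 0" by (simp add: iv_def)

lemma iv_measurable[measurable]: "iv k \<in> borel_measurable borel"
  unfolding iv_def by measurable

lemma iv_scale: "c > 0 \<Longrightarrow> iv k (c *\<^sub>R x) = iv k x / c ^ k"
  by (simp add: iv_def power_mult_distrib field_simps)

definition V4 :: real where "V4 = unit_ball_vol 4"

lemma V4_pos: "V4 > 0" by (simp add: V4_def)

lemma emeasure_cball4: "r \<ge> 0 \<Longrightarrow> emeasure lborel (cball (c::real^4) r) = ennreal (V4 * r ^ 4)"
  using emeasure_cball[of r c] by (simp add: V4_def)

lemma dyadic_small:
  fixes r :: real assumes "0 < r" "r \<le> 1"
  shows "\<exists>k. (1/2)^(Suc k) < r \<and> r \<le> (1/2)^k"
proof -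
  obtain n where n: "(1/2::real)^n < r" using real_arch_pow_inv[of r "1/2"] assms by auto
  define k where "k = (LEAST k. (1/2::real)^(Suc k) < r)"
  have ex: "\<exists>k. (1/2::real)^(Suc k) < r"
    using n by (intro exI[of _ n]) (rule le_less_trans[OF _ n], simp add: power_Suc)
  have k1: "(1/2::real)^(Suc k) < r" unfolding k_def by (rule LeastI_ex[OF ex])
  have "r \<le> (1/2)^k"
  proof (cases k)
    case 0 then show ?thesis using assms by simp
  next
    case (Suc m)
    have "\<not> (1/2::real)^(Suc m) < r"
      using Suc not_less_Least[of m "\<lambda>k. (1/2::real)^(Suc k) < r"] unfolding k_def by auto
    then show ?thesis using Suc by simp
  qed
  with k1 show ?thesis by blast
qed

lemma ennreal_term_le_suminf: "(f::nat \<Rightarrow> ennreal) k \<le> (\<Sum>n. f n)"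
  using ennreal_suminf_lessD verit_comp_simplify1(3) by blast

lemma cball_borel[measurable]: "cball (c::real^4) r \<in> sets borel"
  by (simp add: borel_closed)

lemma pw_swap: "((a::real)^m)^n = (a^n)^m"
  by (metis power_mult mult.commute)

lemma pw_t1: "1 / ((1/2::real)^(Suc k)) ^ 3 = 8 * 8^k"
  by (subst pw_swap) (simp add: power_one_over)

lemma pw_t3: "(8::real) * 8^k * (V * ((1/2)^k)^4) = 8 * V * (1/2)^k"
proof -
  have "((1/2::real)^k)^4 = (1/16)^k" by (subst pw_swap) (simp add: power_one_over)
  moreover have "(8::real)^k * (1/16)^k = (1/2)^k" by (simp add: power_mult_distrib[symmetric])
  ultimately show ?thesis by (metis (no_types, lifting) mult.assoc mult.left_commute)
qed

lemma int_small_finite: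
  "(\<integral>\<^sup>+x. indicator (cball 0 1) x * ennreal (iv 3 x) \<partial>lborel) < \<infinity>"
proof -
  have pw: "indicator (cball 0 1) x * ennreal (iv 3 x) \<le>
     (\<Sum>k. ennreal (8 * 8^k) * indicator (cball (0::real^4) ((1/2)^k)) x)" for x
  proof (cases "x = 0 \<or> norm x > 1")
    case True
    then have "indicator (cball 0 1) x * ennreal (iv 3 x) = 0"
      by (cases "x = 0") (simp_all add: iv_def indicator_def dist_norm)
    then show ?thesis by (metis zero_le)
  next
    case False
    then have x: "0 < norm x" "norm x \<le> 1" by auto
    then obtain k where k: "(1/2)^(Suc k) < norm x" "norm x \<le> (1/2)^k" using dyadic_small by blast
    have "iv 3 x = 1 / norm x ^ 3" by (simp add: iv_def field_simps)
    also have "\<dots> \<le> 1 / ((1/2)^(Suc k)) ^ 3"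
    proof -
      have "((1/2)^(Suc k))^3 \<le> norm x ^ 3" using k(1) by (intro power_mono) auto
      moreover have "0 < norm x ^ 3 * ((1/2::real)^(Suc k))^3" using x(1) by simp
      ultimately show ?thesis by (intro divide_left_mono) simp_all
    qed
    also have "\<dots> = 8 * 8^k" by (rule pw_t1)
    finally have iv3: "iv 3 x \<le> 8 * 8^k" .
    have "indicator (cball 0 1) x * ennreal (iv 3 x) \<le> ennreal (8 * 8^k) * indicator (cball (0::real^4) ((1/2)^k)) x"
      using x k iv3 by (simp add: indicator_def dist_norm)
    also have "\<dots> \<le> (\<Sum>k. ennreal (8 * 8^k) * indicator (cball (0::real^4) ((1/2)^k)) x)"
      by (rule ennreal_term_le_suminf)
    finally show ?thesis .
  qed
  have "(\<integral>\<^sup>+x. indicator (cball 0 1) x * ennreal (iv 3 x) \<partial>lborel) \<le>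
        (\<integral>\<^sup>+x. (\<Sum>k. ennreal (8 * 8^k) * indicator (cball (0::real^4) ((1/2)^k)) x) \<partial>lborel)"
    by (intro nn_integral_mono pw)
  also have "\<dots> = (\<Sum>k. \<integral>\<^sup>+x. ennreal (8 * 8^k) * indicator (cball (0::real^4) ((1/2)^k)) x \<partial>lborel)"
    by (rule nn_integral_suminf) measurable
  also have "\<dots> = (\<Sum>k. ennreal (8 * V4 * (1/2)^k))"
  proof (intro suminf_cong)
    fix k
    have "(\<integral>\<^sup>+x. ennreal (8 * 8^k) * indicator (cball (0::real^4) ((1/2)^k)) x \<partial>lborel)
        = ennreal (8 * 8^k) * ennreal (V4 * ((1/2)^k)^4)"
      by (simp add: nn_integral_cmult_indicator emeasure_cball4)
    also have "\<dots> = ennreal (8 * V4 * (1/2)^k)"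
      using V4_pos by (simp add: ennreal_mult'[symmetric] pw_t3)
    finally show "(\<integral>\<^sup>+x. ennreal (8 * 8^k) * indicator (cball (0::real^4) ((1/2)^k)) x \<partial>lborel) = ennreal (8 * V4 * (1/2)^k)" .
  qed
  also have "\<dots> < \<infinity>"
  proof -
    have "(\<Sum>k. ennreal (8 * V4 * (1/2)^k)) \<noteq> top"
      using V4_pos by (intro ennreal_suminf_neq_top summable_mult summable_geometric) auto
    then show ?thesis by (simp add: less_top)
  qed
  finally show ?thesis .
qed

lemma cball_compl_borel[measurable]: "- ball (c::real^4) r \<in> sets borel"
  by (intro borel_closed closed_Compl open_ball)

lemma pw_t4: "(1/32::real)^k * (V * (2^(Suc k))^4) = 16 * V * (1/2)^k"
proof -
  have "((2::real)^(Suc k))^4 = 16 * 16^k" by (subst pw_swap) simp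
  moreover have "(1/32::real)^k * 16^k = (1/2)^k" by (simp add: power_mult_distrib[symmetric])
  ultimately show ?thesis by (metis (no_types, lifting) mult.assoc mult.left_commute)
qed

lemma int_large_finite:
  "(\<integral>\<^sup>+x. indicator (- ball 0 1) x * ennreal (iv 5 x) \<partial>lborel) < \<infinity>"
proof -
  have pw: "indicator (- ball 0 1) x * ennreal (iv 5 x) \<le>
     (\<Sum>k. ennreal ((1/32)^k) * indicator (cball (0::real^4) (2^(Suc k))) x)" for x
  proof (cases "norm x < 1")
    case True
    then have "indicator (- ball 0 1) x * ennreal (iv 5 x) = 0"
      by (simp add: indicator_def dist_norm)
    then show ?thesis by (metis zero_le)
  next
    case False
    then have x: "1 \<le> norm x" "0 < norm x" by auto
    have "0 < 1 / norm x" "1 / norm x \<le> 1" using x by auto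
    then obtain k where k: "(1/2)^(Suc k) < 1 / norm x" "1 / norm x \<le> (1/2)^k" using dyadic_small by blast
    have k1: "2^k \<le> norm x" using k(2) x by (simp add: power_one_over field_simps)
    have k2: "norm x \<le> 2^(Suc k)" using k(1) x by (simp add: power_one_over field_simps del: power_Suc)
    have "iv 5 x = 1 / norm x ^ 5" by (simp add: iv_def field_simps)
    also have "\<dots> \<le> 1 / (2^k) ^ 5"
    proof -
      have "(2^k)^5 \<le> norm x ^ 5" using k1 by (intro power_mono) auto
      moreover have "0 < norm x ^ 5 * (2^k)^5" using x by simp
      ultimately show ?thesis by (intro divide_left_mono) simp_all
    qed
    also have "\<dots> = (1/32)^k" by (subst pw_swap) (simp add: power_one_over)
    finally have iv5: "iv 5 x \<le> (1/32)^k" .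
    have "indicator (- ball 0 1) x * ennreal (iv 5 x) \<le> ennreal ((1/32)^k) * indicator (cball (0::real^4) (2^(Suc k))) x"
      using x k2 iv5 by (simp add: indicator_def dist_norm del: power_Suc)
    also have "\<dots> \<le> (\<Sum>k. ennreal ((1/32)^k) * indicator (cball (0::real^4) (2^(Suc k))) x)"
      by (rule ennreal_term_le_suminf)
    finally show ?thesis .
  qed
  have "(\<integral>\<^sup>+x. indicator (- ball 0 1) x * ennreal (iv 5 x) \<partial>lborel) \<le>
        (\<integral>\<^sup>+x. (\<Sum>k. ennreal ((1/32)^k) * indicator (cball (0::real^4) (2^(Suc k))) x) \<partial>lborel)"
    by (intro nn_integral_mono pw)
  also have "\<dots> = (\<Sum>k. \<integral>\<^sup>+x. ennreal ((1/32)^k) * indicator (cball (0::real^4) (2^(Suc k))) x \<partial>lborel)"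
    by (rule nn_integral_suminf) measurable
  also have "\<dots> = (\<Sum>k. ennreal (16 * V4 * (1/2)^k))"
  proof (intro suminf_cong)
    fix k
    have "(\<integral>\<^sup>+x. ennreal ((1/32)^k) * indicator (cball (0::real^4) (2^(Suc k))) x \<partial>lborel)
        = ennreal ((1/32)^k) * ennreal (V4 * (2^(Suc k))^4)"
      by (simp add: nn_integral_cmult_indicator emeasure_cball4 del: power_Suc)
    also have "\<dots> = ennreal (16 * V4 * (1/2)^k)"
      using V4_pos by (simp add: ennreal_mult'[symmetric] pw_t4 del: power_Suc)
    finally show "(\<integral>\<^sup>+x. ennreal ((1/32)^k) * indicator (cball (0::real^4) (2^(Suc k))) x \<partial>lborel) = ennreal (16 * V4 * (1/2)^k)" .
  qed
  also have "\<dots> < \<infinity>"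
  proof -
    have "(\<Sum>k. ennreal (16 * V4 * (1/2)^k)) \<noteq> top"
      using V4_pos by (intro ennreal_suminf_neq_top summable_mult summable_geometric) auto
    then show ?thesis by (simp add: less_top)
  qed
  finally show ?thesis .
qed




lemma inv_pow_le: "0 < (c::real) \<Longrightarrow> c \<le> x \<Longrightarrow> 1/x^n \<le> 1/c^n"
  by (intro divide_left_mono power_mono) auto
lemma ip_a1: "(b::real) \<ge> 1/2 \<Longrightarrow> 1/b^2 \<le> 4"
  using inv_pow_le[of "1/2" b 2] by (simp add: power_divide)
lemma ip_a2: "(a::real) \<ge> 1/2 \<Longrightarrow> 1/a^3 \<le> 8"
  using inv_pow_le[of "1/2" a 3] by (simp add: power_divide)
lemma ip_a3: "(b::real) \<le> 1 \<Longrightarrow> 0 < b \<Longrightarrow> 1/b^2 \<le> 1/b^3"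
proof -
  assume b: "b \<le> 1" "0 < b"
  have "b^3 \<le> b^2" using b by (simp add: power_decreasing)
  then show ?thesis using b by (intro divide_left_mono) auto
qed
lemma ip_a4: "(a::real) > 0 \<Longrightarrow> 1/a^3 * (1/(a/2)^2) = 4/a^5"
  by (simp add: power_divide field_simps eval_nat_numeral)

lemma key_pw_real:
  fixes a b :: real
  assumes "0<a" "0<b" "a \<le> b + 1" "1 \<le> a + b"
  shows "1/a^3 * (1/b^2) \<le> (if a \<le> 1/2 then 4/a^3 else if b \<le> 1/2 then 8/b^3 else if a \<le> 2 then 32 else 4/a^5)"
proof -
  consider "a \<le> 1/2" | "\<not> a \<le> 1/2" "b \<le> 1/2" | "\<not> a \<le> 1/2" "\<not> b \<le> 1/2" "a \<le> 2" | "\<not> a \<le> 1/2" "\<not> b \<le> 1/2" "\<not> a \<le> 2"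
    by blast
  then show ?thesis
  proof cases
    case 1
    then have "b \<ge> 1/2" using assms by linarith
    then have "1/b^2 \<le> 4" by (rule ip_a1)
    then have "1/a^3 * (1/b^2) \<le> 1/a^3 * 4" using assms by (intro mult_left_mono) auto
    then show ?thesis using 1 by simp
  next
    case 2
    then have "1/a^3 \<le> 8" using ip_a2 by simp
    moreover have "1/b^2 \<le> 1/b^3" using 2 assms by (intro ip_a3) auto
    ultimately have "1/a^3 * (1/b^2) \<le> 8 * (1/b^3)" using assms by (intro mult_mono) auto
    then show ?thesis using 2 by simp
  next
    case 3
    then have "1/a^3 \<le> 8" using ip_a2 by simp
    moreover have "1/b^2 \<le> 4" using 3 ip_a1 by simp
    ultimately have "1/a^3 * (1/b^2) \<le> 8 * 4" using assms by (intro mult_mono) auto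
    then show ?thesis using 3 by simp
  next
    case 4
    then have "b \<ge> a/2" using assms by linarith
    then have "1/b^2 \<le> 1/(a/2)^2" using assms by (intro inv_pow_le) auto
    then have "1/a^3 * (1/b^2) \<le> 1/a^3 * (1/(a/2)^2)" using assms by (intro mult_left_mono) auto
    also have "\<dots> = 4/a^5" using assms(1) by (rule ip_a4)
    finally show ?thesis using 4 by simp
  qed
qed

lemma le_sum4: fixes A B C D X :: ennreal shows "X \<le> A \<or> X \<le> B \<or> X \<le> C \<or> X \<le> D \<Longrightarrow> X \<le> A + B + C + D"
proof -
  have "A \<le> A + B + C + D" "B \<le> A + B + C + D" "C \<le> A + B + C + D" "D \<le> A + B + C + D"
    by (simp_all add: add_increasing add_increasing2)
  then show "X \<le> A \<or> X \<le> B \<or> X \<le> C \<or> X \<le> D \<Longrightarrow> X \<le> A + B + C + D" using order_trans by blast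
qed

lemma ennreal_num_div: "ennreal (numeral n / y) = numeral n * ennreal (1 / y)"
  using ennreal_mult'[of "numeral n" "1/y"] by simp

lemma iv_eq: "iv k x = 1 / norm x ^ k" by (simp add: iv_def divide_inverse)

lemma key_pw:
  assumes e: "norm e = 1"
  shows "ennreal (iv 3 u * iv 2 (u - e)) \<le> 4 * (indicator (cball 0 1) u * ennreal (iv 3 u))
     + 8 * (indicator (cball 0 1) (u - e) * ennreal (iv 3 (u - e)))
     + 32 * indicator (cball 0 2) u + 4 * (indicator (- ball 0 1) u * ennreal (iv 5 u))"
    (is "_ \<le> ?A + ?B + ?C + ?D")
proof (cases "u = 0 \<or> u = e")
  case True
  then have "iv 3 u * iv 2 (u - e) = 0" by (auto simp: iv_def)
  then have "ennreal (iv 3 u * iv 2 (u - e)) = 0" by simp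
  then show ?thesis by (metis zero_le)
next
  case False
  define a where "a = norm u"
  define b where "b = norm (u - e)"
  have ab: "0 < a" "0 < b" using False by (auto simp: a_def b_def)
  have t1: "a \<le> b + 1" using norm_triangle_sub[of u e] e by (simp add: a_def b_def)
  have t2: "1 \<le> a + b" using norm_triangle_ineq4[of u "u - e"] e by (simp add: a_def b_def)
  have lhs: "iv 3 u * iv 2 (u - e) = 1/a^3 * (1/b^2)" by (simp add: iv_eq a_def b_def)
  note kp = key_pw_real[OF ab t1 t2]
  have "ennreal (iv 3 u * iv 2 (u - e)) \<le> ?A \<or> ennreal (iv 3 u * iv 2 (u - e)) \<le> ?B
     \<or> ennreal (iv 3 u * iv 2 (u - e)) \<le> ?C \<or> ennreal (iv 3 u * iv 2 (u - e)) \<le> ?D"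
  proof -
    consider "a \<le> 1/2" | "\<not> a \<le> 1/2" "b \<le> 1/2" | "\<not> a \<le> 1/2" "\<not> b \<le> 1/2" "a \<le> 2" | "\<not> a \<le> 1/2" "\<not> b \<le> 1/2" "\<not> a \<le> 2"
      by blast
    then show ?thesis
    proof cases
      case 1
      have "ennreal (iv 3 u * iv 2 (u - e)) \<le> ennreal (4 * (1/a^3))" using kp 1 lhs by (intro ennreal_leI) simp
      also have "\<dots> = ?A" using 1 by (simp add: ennreal_num_div iv_eq a_def[symmetric] indicator_def dist_norm)
      finally show ?thesis by blast
    next
      case 2
      have nb: "norm (e - u) = b" by (simp add: b_def norm_minus_commute)
      have "ennreal (iv 3 u * iv 2 (u - e)) \<le> ennreal (8 * (1/b^3))" using kp 2 lhs by (intro ennreal_leI) simp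
      also have "\<dots> = ?B" using 2 nb by (simp add: ennreal_num_div iv_eq b_def[symmetric] indicator_def dist_norm)
      finally show ?thesis by blast
    next
      case 3
      have "ennreal (iv 3 u * iv 2 (u - e)) \<le> ennreal 32" using kp 3 lhs by (intro ennreal_leI) simp
      also have "\<dots> = ?C" using 3 by (simp add: indicator_def dist_norm a_def)
      finally show ?thesis by blast
    next
      case 4
      have "ennreal (iv 3 u * iv 2 (u - e)) \<le> ennreal (4 * (1/a^5))" using kp 4 lhs by (intro ennreal_leI) simp
      also have "\<dots> = ?D" using 4 by (simp add: ennreal_num_div iv_eq a_def[symmetric] indicator_def dist_norm)
      finally show ?thesis by blast
    qed
  qed
  then show ?thesis by (rule le_sum4)
qed

definition KA :: ennreal where "KA = (\<integral>\<^sup>+x. indicator (cball 0 1) x * ennreal (iv 3 x) \<partial>lborel)"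
definition KB :: ennreal where "KB = (\<integral>\<^sup>+x. indicator (- ball 0 1) x * ennreal (iv 5 x) \<partial>lborel)"
definition KK :: ennreal where "KK = 4 * KA + 8 * KA + 32 * ennreal (V4 * 2^4) + 4 * KB"

lemma KK_finite: "KK < \<infinity>"
  using int_small_finite int_large_finite unfolding KK_def KA_def KB_def
  by (simp add: ennreal_mult_eq_top_iff less_top[symmetric])

lemma key_unit:
  assumes e: "norm e = 1"
  shows "(\<integral>\<^sup>+u. ennreal (iv 3 u * iv 2 (u - e)) \<partial>lborel) \<le> KK"
proof -
  have "(\<integral>\<^sup>+u. ennreal (iv 3 u * iv 2 (u - e)) \<partial>lborel) \<le>
    (\<integral>\<^sup>+u. 4 * (indicator (cball 0 1) u * ennreal (iv 3 u))
     + 8 * (indicator (cball 0 1) (u - e) * ennreal (iv 3 (u - e)))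
     + 32 * indicator (cball 0 2) u + 4 * (indicator (- ball 0 1) u * ennreal (iv 5 u)) \<partial>lborel)"
    by (intro nn_integral_mono key_pw[OF e])
  also have "\<dots> = (\<integral>\<^sup>+u. 4 * (indicator (cball 0 1) u * ennreal (iv 3 u)) \<partial>lborel)
     + (\<integral>\<^sup>+u. 8 * (indicator (cball 0 1) (u - e) * ennreal (iv 3 (u - e))) \<partial>lborel)
     + (\<integral>\<^sup>+u. 32 * indicator (cball 0 2) (u::real^4) \<partial>lborel)
     + (\<integral>\<^sup>+u. 4 * (indicator (- ball 0 1) u * ennreal (iv 5 u)) \<partial>lborel)"
  proof -
    have m1: "(\<lambda>u. 4 * (indicator (cball 0 1) u * ennreal (iv 3 u))) \<in> borel_measurable lborel" by measurable
    have m2: "(\<lambda>u. 8 * (indicator (cball 0 1) (u - e) * ennreal (iv 3 (u - e)))) \<in> borel_measurable lborel" by measurable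
    have m3: "(\<lambda>u::real^4. 32 * indicator (cball 0 2) u :: ennreal) \<in> borel_measurable lborel" by measurable
    have m4: "(\<lambda>u. 4 * (indicator (- ball 0 1) u * ennreal (iv 5 u))) \<in> borel_measurable lborel" by measurable
    show ?thesis
      apply (subst nn_integral_add)
        apply (intro borel_measurable_add m1 m2 m3)
       apply (rule m4)
      apply (subst nn_integral_add)
        apply (intro borel_measurable_add m1 m2)
       apply (rule m3)
      apply (subst nn_integral_add[OF m1 m2])
      apply (rule refl)
      done
  qed
  also have "(\<integral>\<^sup>+u. 8 * (indicator (cball 0 1) (u - e) * ennreal (iv 3 (u - e))) \<partial>lborel)
      = 8 * KA"
  proof -
    have "KA = (\<integral>\<^sup>+u. indicator (cball 0 1) (-e + u) * ennreal (iv 3 (-e + u)) \<partial>lborel)"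
      unfolding KA_def by (rule nn_integral_shift4) measurable
    then have eq: "KA = (\<integral>\<^sup>+u. indicator (cball 0 1) (u - e) * ennreal (iv 3 (u - e)) \<partial>lborel)"
      by (simp add: add.commute)
    have "(\<integral>\<^sup>+u. 8 * (indicator (cball 0 1) (u - e) * ennreal (iv 3 (u - e))) \<partial>lborel)
        = 8 * (\<integral>\<^sup>+u. indicator (cball 0 1) (u - e) * ennreal (iv 3 (u - e)) \<partial>lborel)"
      by (rule nn_integral_cmult) measurable
    then show ?thesis using eq by simp
  qed
  also have "(\<integral>\<^sup>+u. 4 * (indicator (cball 0 1) u * ennreal (iv 3 u)) \<partial>lborel) = 4 * KA"
    unfolding KA_def by (rule nn_integral_cmult) measurable
  also have "(\<integral>\<^sup>+u. 4 * (indicator (- ball 0 1) u * ennreal (iv 5 u)) \<partial>lborel) = 4 * KB"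
    unfolding KB_def by (rule nn_integral_cmult) measurable
  also have "(\<integral>\<^sup>+u. 32 * indicator (cball 0 2) (u::real^4) \<partial>lborel) = 32 * ennreal (V4 * 2^4)"
    by (simp add: nn_integral_cmult_indicator emeasure_cball4)
  finally show ?thesis unfolding KK_def by simp
qed

lemma key_scaled:
  assumes y: "y \<noteq> 0"
  shows "(\<integral>\<^sup>+x. ennreal (iv 3 x * iv 2 (x - y)) \<partial>lborel) \<le> KK * ennreal (iv 1 y)"
proof -
  define r where "r = norm y"
  define e where "e = (1/r) *\<^sub>R y"
  have r: "r > 0" using y by (simp add: r_def)
  have ne: "norm e = 1" using r by (simp add: e_def r_def)
  have ye: "y = r *\<^sub>R e" using r by (simp add: e_def)
  have "(\<integral>\<^sup>+x. ennreal (iv 3 x * iv 2 (x - y)) \<partial>lborel)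
      = ennreal (\<bar>r\<bar>^4) * (\<integral>\<^sup>+u. ennreal (iv 3 (0 + r *\<^sub>R u) * iv 2 ((0 + r *\<^sub>R u) - y)) \<partial>lborel)"
  proof -
    have m: "(\<lambda>x. ennreal (iv 3 x * iv 2 (x - y))) \<in> borel_measurable borel" by measurable
    show ?thesis by (rule nn_integral_affine4[OF m]) (use r in simp)
  qed
  also have "(\<lambda>u. ennreal (iv 3 (0 + r *\<^sub>R u) * iv 2 ((0 + r *\<^sub>R u) - y)))
      = (\<lambda>u. ennreal (1 / r^5) * ennreal (iv 3 u * iv 2 (u - e)))"
  proof
    fix u
    have "r *\<^sub>R u - y = r *\<^sub>R (u - e)" by (simp add: ye scaleR_diff_right)
    then have a: "iv 2 ((0 + r *\<^sub>R u) - y) = iv 2 (u - e) / r^2" using r by (simp add: iv_scale)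
    have b: "iv 3 (0 + r *\<^sub>R u) = iv 3 u / r^3" using r by (simp add: iv_scale)
    have r5: "r^5 = r^3 * r^2" by (simp add: power_add[symmetric])
    have eq: "iv 3 (0 + r *\<^sub>R u) * iv 2 ((0 + r *\<^sub>R u) - y) = (1 / r^5) * (iv 3 u * iv 2 (u - e))"
      unfolding a b r5 by simp
    show "ennreal (iv 3 (0 + r *\<^sub>R u) * iv 2 ((0 + r *\<^sub>R u) - y)) = ennreal (1 / r^5) * ennreal (iv 3 u * iv 2 (u - e))"
      unfolding eq using r by (intro ennreal_mult') simp
  qed
  also have "(\<integral>\<^sup>+u. ennreal (1 / r^5) * ennreal (iv 3 u * iv 2 (u - e)) \<partial>lborel)
     = ennreal (1 / r^5) * (\<integral>\<^sup>+u. ennreal (iv 3 u * iv 2 (u - e)) \<partial>lborel)"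
    by (rule nn_integral_cmult) measurable
  also have "ennreal (\<bar>r\<bar>^4) * (ennreal (1 / r^5) * (\<integral>\<^sup>+u. ennreal (iv 3 u * iv 2 (u - e)) \<partial>lborel))
     = ennreal (iv 1 y) * (\<integral>\<^sup>+u. ennreal (iv 3 u * iv 2 (u - e)) \<partial>lborel)"
  proof -
    have "\<bar>r\<bar>^4 * (1/r^5) = iv 1 y" using r by (simp add: iv_eq r_def[symmetric] eval_nat_numeral field_simps)
    then show ?thesis using r by (simp add: ennreal_mult[symmetric] mult.assoc[symmetric])
  qed
  also have "\<dots> \<le> ennreal (iv 1 y) * KK" by (intro mult_left_mono key_unit ne) simp
  finally show ?thesis by (simp add: mult.commute)
qed

lemma key_center:
  assumes y: "y \<noteq> c"
  shows "(\<integral>\<^sup>+x. ennreal (iv 3 (x - c) * iv 2 (x - y)) \<partial>lborel) \<le> KK * ennreal (iv 1 (y - c))"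
proof -
  have "(\<integral>\<^sup>+x. ennreal (iv 3 (x - c) * iv 2 (x - y)) \<partial>lborel)
      = (\<integral>\<^sup>+u. ennreal (iv 3 ((c + u) - c) * iv 2 ((c + u) - y)) \<partial>lborel)"
    by (rule nn_integral_shift4) measurable
  also have "\<dots> = (\<integral>\<^sup>+u. ennreal (iv 3 u * iv 2 (u - (y - c))) \<partial>lborel)"
    by (simp add: algebra_simps)
  also have "\<dots> \<le> KK * ennreal (iv 1 (y - c))" using y by (intro key_scaled) simp
  finally show ?thesis .
qed

lemma mono5:
  fixes X Y :: real assumes Y: "0 \<le> Y" "Y \<le> X" "Y \<le> 2"
  shows "X^2*Y^2 \<le> 2*X^3" "X^2*Y \<le> X^3" "X*Y^2 \<le> X^3" "X^3*Y^2 \<le> 4*X^3" "X^2*Y^3 \<le> 4*X^3"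
proof -
  have X: "0 \<le> X" using Y by linarith
  have yy: "Y*Y \<le> 2*X" using Y X by (intro mult_mono) auto
  have yy4: "Y*Y \<le> 2*2" using Y by (intro mult_mono) auto
  have yyy: "Y*Y*Y \<le> 2*2*X" using Y X yy4 by (intro mult_mono) auto
  have xy: "X*Y \<le> X*X" using Y X by (intro mult_left_mono) auto
  have yx: "Y*Y \<le> X*X" using Y X by (intro mult_mono) auto
  show "X^2*Y^2 \<le> 2*X^3"
    using mult_left_mono[OF yy, of "X*X"] X by (simp add: power2_eq_square power3_eq_cube algebra_simps)
  show "X^2*Y \<le> X^3"
    using mult_left_mono[OF xy, of "X"] X by (simp add: power2_eq_square power3_eq_cube algebra_simps)
  show "X*Y^2 \<le> X^3"
    using mult_left_mono[OF yx, of "X"] X by (simp add: power2_eq_square power3_eq_cube algebra_simps)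
  show "X^3*Y^2 \<le> 4*X^3"
    using mult_left_mono[OF yy4, of "X*X*X"] X by (simp add: power2_eq_square power3_eq_cube algebra_simps)
  show "X^2*Y^3 \<le> 4*X^3"
    using mult_left_mono[OF yyy, of "X*X"] X by (simp add: power2_eq_square power3_eq_cube algebra_simps)
qed

lemma prop_iv: "propagator a b = iv 2 (a - b)" by (simp add: propagator_def iv_eq)

lemma iv_pow: "iv k y = (iv 1 y)^k" by (simp add: iv_def power_inverse)

lemma norm_e1: "norm e1 = 1" by (simp add: e1_def)

definition gg :: "real^4 \<Rightarrow> real" where "gg y = iv 1 y + iv 1 (y - e1)"
definition hh :: "real^4 \<Rightarrow> real" where "hh y = iv 3 y + iv 3 (y - e1)"

lemma XY_cases:
  "(iv 1 (y - e1) \<le> iv 1 y \<and> iv 1 (y - e1) \<le> 2) \<or> (iv 1 y \<le> iv 1 (y - e1) \<and> iv 1 y \<le> 2)"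
proof -
  define a where "a = norm y"
  define b where "b = norm (y - e1)"
  have ab: "1 \<le> a + b" using norm_triangle_ineq4[of y "y - e1"] norm_e1 by (simp add: a_def b_def)
  have X: "iv 1 y = 1 / a" and Y: "iv 1 (y - e1) = 1 / b" by (simp_all add: iv_eq a_def b_def)
  have a0: "a \<ge> 0" "b \<ge> 0" by (simp_all add: a_def b_def)
  consider "a = 0" | "b = 0" | "0 < a" "0 < b" "a \<le> b" | "0 < a" "0 < b" "b \<le> a" using a0 by linarith
  then show ?thesis
  proof cases
    case 1 then have "b \<ge> 1" using ab by simp
    then show ?thesis using 1 X Y by simp
  next
    case 2 then have "a \<ge> 1" using ab by simp
    then show ?thesis using 2 X Y by simp
  next
    case 3
    then have "b \<ge> 1/2" using ab by simp
    then have "1/b \<le> 2" using 3 by (simp add: field_simps)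
    moreover have "1/b \<le> 1/a" using 3 by (intro divide_left_mono) auto
    ultimately show ?thesis using X Y by simp
  next
    case 4
    then have "a \<ge> 1/2" using ab by simp
    then have "1/a \<le> 2" using 4 by (simp add: field_simps)
    moreover have "1/a \<le> 1/b" using 4 by (intro divide_left_mono) auto
    ultimately show ?thesis using X Y by simp
  qed
qed

lemma prop0: "propagator y 0 = (iv 1 y)^2" by (simp add: prop_iv iv_pow[of 2])
lemma prop1: "propagator y e1 = (iv 1 (y - e1))^2" by (simp add: prop_iv iv_pow[of 2])
lemma hh_XY: "hh y = (iv 1 y)^3 + (iv 1 (y - e1))^3" by (simp add: hh_def iv_pow[of 3])

lemma poly_bounds:
  fixes X Y :: real assumes "0 \<le> X" "0 \<le> Y" "(Y \<le> X \<and> Y \<le> 2) \<or> (X \<le> Y \<and> X \<le> 2)"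
  shows "X^2*Y^2 \<le> 8*(X^3+Y^3)" "(X+Y)*X^2 \<le> 8*(X^3+Y^3)" "(X+Y)*Y^2 \<le> 8*(X^3+Y^3)"
    "(X+Y)*(X^2*Y^2) \<le> 8*(X^3+Y^3)"
proof -
  have e1: "(X+Y)*X^2 = X^3 + X^2*Y" by algebra
  have e2: "(X+Y)*Y^2 = X*Y^2 + Y^3" by algebra
  have e3: "(X+Y)*(X^2*Y^2) = X^3*Y^2 + X^2*Y^3" by algebra
  have c: "X^2*Y \<le> 8*(X^3+Y^3) \<and> X*Y^2 \<le> 8*(X^3+Y^3) \<and> X^2*Y^2 \<le> 8*(X^3+Y^3) \<and>
      X^3*Y^2 + X^2*Y^3 \<le> 8*(X^3+Y^3) \<and> X^3 + X^2*Y \<le> 8*(X^3+Y^3) \<and> X*Y^2 + Y^3 \<le> 8*(X^3+Y^3)"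
    using assms(3)
  proof
    assume h: "Y \<le> X \<and> Y \<le> 2"
    have p: "0 \<le> X^3" "0 \<le> Y^3" using assms by simp_all
    have m: "X^2*Y^2 \<le> 2*X^3" "X^2*Y \<le> X^3" "X*Y^2 \<le> X^3" "X^3*Y^2 \<le> 4*X^3" "X^2*Y^3 \<le> 4*X^3"
      using mono5[of Y X] h assms by auto
    show ?thesis using m p by (intro conjI; smt (verit))
  next
    assume h: "X \<le> Y \<and> X \<le> 2"
    have p: "0 \<le> X^3" "0 \<le> Y^3" using assms by simp_all
    have m0: "Y^2*X^2 \<le> 2*Y^3" "Y^2*X \<le> Y^3" "Y*X^2 \<le> Y^3" "Y^3*X^2 \<le> 4*Y^3" "Y^2*X^3 \<le> 4*Y^3"
      using mono5[of X Y] h assms by auto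
    have m: "X^2*Y^2 \<le> 2*Y^3" "X*Y^2 \<le> Y^3" "X^2*Y \<le> Y^3" "X^2*Y^3 \<le> 4*Y^3" "X^3*Y^2 \<le> 4*Y^3"
      using m0 by (simp_all add: mult.commute)
    show ?thesis using m p by (intro conjI; smt (verit))
  qed
  show "X^2*Y^2 \<le> 8*(X^3+Y^3)" using c by simp
  show "(X+Y)*X^2 \<le> 8*(X^3+Y^3)" using c e1 by simp
  show "(X+Y)*Y^2 \<le> 8*(X^3+Y^3)" using c e2 by simp
  show "(X+Y)*(X^2*Y^2) \<le> 8*(X^3+Y^3)" using c e3 by simp
qed

lemma letter_pw: "gg y * letter_weight l y \<le> 8 * hh y"
proof -
  note pb = poly_bounds[of "iv 1 y" "iv 1 (y - e1)", OF iv_nonneg iv_nonneg XY_cases]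
  show ?thesis using pb by (cases l) (simp_all only: letter_weight.simps prop0 prop1 gg_def hh_XY)
qed

lemma L2_pw: "letter_weight L2 y \<le> 8 * hh y"
proof -
  note pb = poly_bounds[of "iv 1 y" "iv 1 (y - e1)", OF iv_nonneg iv_nonneg XY_cases]
  show ?thesis using pb by (simp only: letter_weight.simps prop0 prop1 hh_XY)
qed

lemma hh_nonneg: "hh x \<ge> 0" by (simp add: hh_def)
lemma gg_nonneg: "gg x \<ge> 0" by (simp add: gg_def)
lemma prop_nonneg: "propagator a b \<ge> 0" by (simp add: propagator_def)
lemma lw_nonneg: "letter_weight l x \<ge> 0" by (cases l) (simp_all add: propagator_def)

lemma hh_measurable[measurable]: "hh \<in> borel_measurable borel" unfolding hh_def by measurable
lemma gg_measurable[measurable]: "gg \<in> borel_measurable borel" unfolding gg_def by measurable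
lemma prop_measurable[measurable]: "(\<lambda>x. propagator (f x) (g x)) \<in> borel_measurable M"
  if [measurable]: "f \<in> borel_measurable M" "g \<in> borel_measurable M"
  unfolding propagator_def by measurable
lemma lw_measurable[measurable]: "(\<lambda>x. letter_weight l (f x)) \<in> borel_measurable M"
  if [measurable]: "f \<in> borel_measurable M"
  by (cases l) simp_all

lemma hh_int:
  assumes "y \<noteq> 0" "y \<noteq> e1"
  shows "(\<integral>\<^sup>+x. ennreal (hh x * propagator x y) \<partial>lborel) \<le> KK * ennreal (gg y)"
proof -
  have pt: "ennreal (hh x * propagator x y) = ennreal (iv 3 (x - 0) * iv 2 (x - y)) + ennreal (iv 3 (x - e1) * iv 2 (x - y))" for x
  proof -
    have "hh x * propagator x y = iv 3 (x - 0) * iv 2 (x - y) + iv 3 (x - e1) * iv 2 (x - y)"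
      by (simp add: hh_def prop_iv distrib_right)
    then show ?thesis by (simp only:) (rule ennreal_plus; simp)
  qed
  have "(\<integral>\<^sup>+x. ennreal (hh x * propagator x y) \<partial>lborel)
     = (\<integral>\<^sup>+x. ennreal (iv 3 (x - 0) * iv 2 (x - y)) + ennreal (iv 3 (x - e1) * iv 2 (x - y)) \<partial>lborel)"
    by (simp only: pt)
  also have "\<dots> = (\<integral>\<^sup>+x. ennreal (iv 3 (x - 0) * iv 2 (x - y)) \<partial>lborel) + (\<integral>\<^sup>+x. ennreal (iv 3 (x - e1) * iv 2 (x - y)) \<partial>lborel)"
    by (rule nn_integral_add) measurable
  also have "\<dots> \<le> KK * ennreal (iv 1 (y - 0)) + KK * ennreal (iv 1 (y - e1))"
    by (intro add_mono key_center assms)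
  also have "\<dots> = KK * ennreal (gg y)"
  proof -
    have "ennreal (gg y) = ennreal (iv 1 (y - 0)) + ennreal (iv 1 (y - e1))"
      unfolding gg_def by (simp only: diff_zero) (rule ennreal_plus; simp)
    then show ?thesis by (simp only: distrib_left)
  qed
  finally show ?thesis .
qed

lemma int_via_hh:
  assumes "y \<noteq> 0" "y \<noteq> e1" and f: "\<And>x. f x \<le> 8 * hh x" "\<And>x. 0 \<le> f x"
    and [measurable]: "f \<in> borel_measurable borel"
  shows "(\<integral>\<^sup>+x. ennreal (f x) * ennreal (propagator x y) \<partial>lborel) \<le> 8 * KK * ennreal (gg y)"
proof -
  have "(\<integral>\<^sup>+x. ennreal (f x) * ennreal (propagator x y) \<partial>lborel) \<le> (\<integral>\<^sup>+x. 8 * ennreal (hh x * propagator x y) \<partial>lborel)"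
  proof (intro nn_integral_mono)
    fix x
    have "f x * propagator x y \<le> 8 * hh x * propagator x y"
      using f(1)[of x] prop_nonneg[of x y] by (intro mult_right_mono) auto
    then have "ennreal (f x * propagator x y) \<le> ennreal (8 * (hh x * propagator x y))"
      by (intro ennreal_leI) (simp add: mult.assoc)
    moreover have "ennreal (f x * propagator x y) = ennreal (f x) * ennreal (propagator x y)"
      using f(2)[of x] prop_nonneg[of x y] by (rule ennreal_mult)
    moreover have "ennreal (8 * (hh x * propagator x y)) = 8 * ennreal (hh x * propagator x y)"
      using ennreal_mult'[of 8 "hh x * propagator x y"] by simp
    ultimately show "ennreal (f x) * ennreal (propagator x y) \<le> 8 * ennreal (hh x * propagator x y)"
      by simp
  qed
  also have "\<dots> = 8 * (\<integral>\<^sup>+x. ennreal (hh x * propagator x y) \<partial>lborel)"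
    by (rule nn_integral_cmult) measurable
  also have "\<dots> \<le> 8 * (KK * ennreal (gg y))"
    using hh_int[OF assms(1,2)] by (intro mult_left_mono) auto
  finally show ?thesis by (simp add: mult.assoc)
qed

lemma step_bound:
  assumes "y \<noteq> 0" "y \<noteq> e1"
  shows "(\<integral>\<^sup>+x. ennreal (gg x * letter_weight l x) * ennreal (propagator x y) \<partial>lborel) \<le> 8 * KK * ennreal (gg y)"
  by (rule int_via_hh[OF assms letter_pw mult_nonneg_nonneg[OF gg_nonneg lw_nonneg]]) measurable

lemma base_bound:
  assumes "y \<noteq> 0" "y \<noteq> e1"
  shows "(\<integral>\<^sup>+x. ennreal (letter_weight L2 x) * ennreal (propagator x y) \<partial>lborel) \<le> 8 * KK * ennreal (gg y)"
  by (rule int_via_hh[OF assms L2_pw lw_nonneg]) measurable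




definition chainP :: "letter list \<Rightarrow> (nat \<Rightarrow> real^4) \<Rightarrow> real^4 \<Rightarrow> real" where
 "chainP w x y = (\<Prod>i<length w. letter_weight (w!i) (x i)) * (\<Prod>i<length w - 1. propagator (x i) (x (Suc i)))
     * propagator (x (length w - 1)) y"

lemma chainP_nonneg: "chainP w x y \<ge> 0"
  unfolding chainP_def by (intro mult_nonneg_nonneg prod_nonneg lw_nonneg prop_nonneg)

lemma chainP_cong: "(\<And>i. i < length w \<Longrightarrow> x i = x' i) \<Longrightarrow> w \<noteq> [] \<Longrightarrow> chainP w x y = chainP w x' y"
  unfolding chainP_def by (intro arg_cong2[where f="(*)"] prod.cong) auto

lemma chainP_snoc:
  assumes "v \<noteq> []"
  shows "chainP (v @ [a]) x y = chainP v x (x (length v)) * letter_weight a (x (length v)) * propagator (x (length v)) y"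
proof -
  obtain m where m: "length v = Suc m" using assms by (cases v) auto
  have L: "(\<Prod>i<length (v@[a]). letter_weight ((v@[a])!i) (x i)) = (\<Prod>i<length v. letter_weight (v!i) (x i)) * letter_weight a (x (length v))"
    by (simp add: nth_append)
  have P: "(\<Prod>i<length (v@[a]) - 1. propagator (x i) (x (Suc i))) = (\<Prod>i<length v - 1. propagator (x i) (x (Suc i))) * propagator (x (length v - 1)) (x (length v))"
    using m by simp
  show ?thesis unfolding chainP_def L P using m by (simp add: algebra_simps)
qed

lemma chainP_single: "chainP [a] x y = letter_weight a (x 0) * propagator (x 0) y"
  by (simp add: chainP_def)

lemma chainP_meas:
  assumes "w \<noteq> []" "length w \<le> m"
  shows "(\<lambda>x. chainP w x y) \<in> borel_measurable (PiM {..<m} (\<lambda>_. lborel :: (real^4) measure))"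
proof -
  have c: "(\<lambda>x. x i) \<in> borel_measurable (PiM {..<m} (\<lambda>_. lborel :: (real^4) measure))" if "i < m" for i
  proof -
    have "(\<lambda>x. x i) \<in> measurable (PiM {..<m} (\<lambda>_. lborel :: (real^4) measure)) lborel"
      by (rule measurable_component_singleton) (use that in auto)
    then show ?thesis by (simp add: measurable_lborel2)
  qed
  have l: "length w - 1 < m" using assms by (cases w) auto
  show ?thesis unfolding chainP_def
    apply (intro borel_measurable_times borel_measurable_prod)
    subgoal for i by (rule lw_measurable[OF c]) (use assms in auto)
    subgoal for i by (rule prop_measurable[OF c c]) (use assms in auto)
    subgoal by (rule prop_measurable[OF c]) (use l in auto)
    done
qed

interpretation P4: product_sigma_finite "\<lambda>_::nat. lborel :: (real^4) measure"
  by unfold_locales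

lemma AE_not01: "AE t in (lborel :: (real^4) measure). t \<noteq> 0 \<and> t \<noteq> e1"
  using AE_lborel_singleton[of "0::real^4"] AE_lborel_singleton[of e1] by eventually_elim auto

lemma chain_bound:
  assumes "w \<noteq> []" "hd w = L2"
  shows "\<exists>C<\<infinity>. \<forall>y. y \<noteq> 0 \<longrightarrow> y \<noteq> e1 \<longrightarrow>
     (\<integral>\<^sup>+x. ennreal (chainP w x y) \<partial>PiM {..<length w} (\<lambda>_. lborel)) \<le> C * ennreal (gg y)"
  using assms
proof (induction w rule: rev_induct)
  case Nil then show ?case by simp
next
  case (snoc a v)
  show ?case
  proof (cases "v = []")
    case True
    then have a: "a = L2" using snoc.prems by simp
    have "(\<integral>\<^sup>+x. ennreal (chainP [a] x y) \<partial>PiM {..<1::nat} (\<lambda>_. lborel :: (real^4) measure)) \<le> (8 * KK) * ennreal (gg y)"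
      if "y \<noteq> 0" "y \<noteq> e1" for y
    proof -
      have "(\<integral>\<^sup>+x. ennreal (chainP [a] x y) \<partial>PiM {..<1::nat} (\<lambda>_. lborel :: (real^4) measure))
          = (\<integral>\<^sup>+x. ennreal (letter_weight L2 (x 0) * propagator (x 0) y) \<partial>PiM {0::nat} (\<lambda>_. lborel :: (real^4) measure))"
        using a by (simp add: chainP_single lessThan_Suc)
      also have "\<dots> = (\<integral>\<^sup>+t. ennreal (letter_weight L2 t * propagator t y) \<partial>lborel)"
        by (rule P4.product_nn_integral_singleton) measurable
      also have "\<dots> = (\<integral>\<^sup>+t. ennreal (letter_weight L2 t) * ennreal (propagator t y) \<partial>lborel)"
        by (intro nn_integral_cong ennreal_mult lw_nonneg prop_nonneg)
      also have "\<dots> \<le> (8 * KK) * ennreal (gg y)" by (rule base_bound[OF that])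
      finally show ?thesis .
    qed
    moreover have "8 * KK < \<infinity>" using KK_finite by (simp add: ennreal_mult_less_top)
    ultimately show ?thesis using True by (intro exI[of _ "8 * KK"]) auto
  next
    case False
    define n where "n = length v"
    have hv: "hd v = L2" using snoc.prems False by simp
    obtain C where C: "C < \<infinity>" and IH: "\<And>y. y \<noteq> 0 \<Longrightarrow> y \<noteq> e1 \<Longrightarrow>
       (\<integral>\<^sup>+x. ennreal (chainP v x y) \<partial>PiM {..<n} (\<lambda>_. lborel)) \<le> C * ennreal (gg y)"
      using snoc.IH[OF False hv] unfolding n_def by blast
    have "(\<integral>\<^sup>+x. ennreal (chainP (v @ [a]) x y) \<partial>PiM {..<length (v @ [a])} (\<lambda>_. lborel)) \<le> (C * (8 * KK)) * ennreal (gg y)"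
      if y: "y \<noteq> 0" "y \<noteq> e1" for y
    proof -
      have meas: "(\<lambda>x. ennreal (chainP (v @ [a]) x y)) \<in> borel_measurable (PiM (insert n {..<n}) (\<lambda>_. lborel :: (real^4) measure))"
      proof -
        have "insert n {..<n} = {..<length (v @ [a])}" by (auto simp: n_def)
        then show ?thesis using chainP_meas[of "v @ [a]" "length (v @ [a])" y] by simp
      qed
      have "(\<integral>\<^sup>+x. ennreal (chainP (v @ [a]) x y) \<partial>PiM {..<length (v @ [a])} (\<lambda>_. lborel))
        = (\<integral>\<^sup>+x. ennreal (chainP (v @ [a]) x y) \<partial>PiM (insert n {..<n}) (\<lambda>_. lborel))"
        by (simp add: n_def lessThan_Suc)
      also have "\<dots> = (\<integral>\<^sup>+t. (\<integral>\<^sup>+x. ennreal (chainP (v @ [a]) (x(n := t)) y) \<partial>PiM {..<n} (\<lambda>_. lborel)) \<partial>lborel)"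
        by (rule P4.product_nn_integral_insert_rev[OF _ _ meas]) auto
      also have "\<dots> = (\<integral>\<^sup>+t. (\<integral>\<^sup>+x. ennreal (chainP v x t) \<partial>PiM {..<n} (\<lambda>_. lborel)) * ennreal (letter_weight a t * propagator t y) \<partial>lborel)"
      proof (intro nn_integral_cong)
        fix t :: "real^4"
        have "(\<integral>\<^sup>+x. ennreal (chainP (v @ [a]) (x(n := t)) y) \<partial>PiM {..<n} (\<lambda>_. lborel))
           = (\<integral>\<^sup>+x. ennreal (chainP v x t) * ennreal (letter_weight a t * propagator t y) \<partial>PiM {..<n} (\<lambda>_. lborel))"
        proof (intro nn_integral_cong)
          fix x :: "nat \<Rightarrow> real^4"
          have "chainP (v @ [a]) (x(n := t)) y = chainP v (x(n := t)) t * (letter_weight a t * propagator t y)"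
            using chainP_snoc[OF False, of a "x(n := t)" y] by (simp add: n_def)
          also have "chainP v (x(n := t)) t = chainP v x t"
            using False by (intro chainP_cong) (auto simp: n_def)
          finally have eq: "chainP (v @ [a]) (x(n := t)) y = chainP v x t * (letter_weight a t * propagator t y)" .
          show "ennreal (chainP (v @ [a]) (x(n := t)) y) = ennreal (chainP v x t) * ennreal (letter_weight a t * propagator t y)"
            unfolding eq by (rule ennreal_mult[OF chainP_nonneg mult_nonneg_nonneg[OF lw_nonneg prop_nonneg]])
        qed
        also have "\<dots> = (\<integral>\<^sup>+x. ennreal (chainP v x t) \<partial>PiM {..<n} (\<lambda>_. lborel)) * ennreal (letter_weight a t * propagator t y)"
          using False by (intro nn_integral_multc chainP_meas[THEN measurable_compose[OF _ measurable_ennreal]]) (auto simp: n_def)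
        finally show "(\<integral>\<^sup>+x. ennreal (chainP (v @ [a]) (x(n := t)) y) \<partial>PiM {..<n} (\<lambda>_. lborel))
           = (\<integral>\<^sup>+x. ennreal (chainP v x t) \<partial>PiM {..<n} (\<lambda>_. lborel)) * ennreal (letter_weight a t * propagator t y)" .
      qed
      also have "\<dots> \<le> (\<integral>\<^sup>+t. C * (ennreal (gg t * letter_weight a t) * ennreal (propagator t y)) \<partial>lborel)"
      proof (intro nn_integral_mono_AE)
        show "AE t in lborel. (\<integral>\<^sup>+x. ennreal (chainP v x t) \<partial>PiM {..<n} (\<lambda>_. lborel)) * ennreal (letter_weight a t * propagator t y)
           \<le> C * (ennreal (gg t * letter_weight a t) * ennreal (propagator t y))"
          using AE_not01
        proof eventually_elim
          case (elim t)
          have "(\<integral>\<^sup>+x. ennreal (chainP v x t) \<partial>PiM {..<n} (\<lambda>_. lborel)) * ennreal (letter_weight a t * propagator t y)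
             \<le> (C * ennreal (gg t)) * ennreal (letter_weight a t * propagator t y)"
            using elim by (intro mult_right_mono IH) auto
          also have "\<dots> = C * (ennreal (gg t * letter_weight a t) * ennreal (propagator t y))"
            by (simp add: ennreal_mult gg_nonneg lw_nonneg prop_nonneg mult.assoc)
          finally show ?case .
        qed
      qed
      also have "\<dots> = C * (\<integral>\<^sup>+t. ennreal (gg t * letter_weight a t) * ennreal (propagator t y) \<partial>lborel)"
        by (rule nn_integral_cmult) measurable
      also have "\<dots> \<le> C * (8 * KK * ennreal (gg y))"
        by (intro mult_left_mono step_bound y) simp
      finally show ?thesis by (simp add: mult.assoc)
    qed
    moreover have "C * (8 * KK) < \<infinity>" using C KK_finite by (simp add: ennreal_mult_less_top)
    ultimately show ?thesis by blast
  qed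
qed




lemma ball_borel[measurable]: "ball (c::real^4) r \<in> sets borel"
  by (simp add: borel_open)

lemma nn_integral_indicator_c: "A \<in> sets M \<Longrightarrow> (\<integral>\<^sup>+t. indicator A t * c \<partial>M) = c * emeasure M A"
  by (simp add: mult.commute nn_integral_cmult_indicator)

definition JJ :: "real \<Rightarrow> ennreal" where
  "JJ R = (\<integral>\<^sup>+t. indicator (- ball (0::real^4) R) t * ennreal (iv 4 t) \<partial>lborel)"

lemma JJ_scale:
  assumes "R > 0" shows "JJ (2 * R) = JJ R"
proof -
  have m: "(\<lambda>t. indicator (- ball (0::real^4) (2*R)) t * ennreal (iv 4 t)) \<in> borel_measurable borel" by measurable
  have "JJ (2*R) = ennreal (\<bar>2\<bar>^4) * (\<integral>\<^sup>+u. indicator (- ball (0::real^4) (2*R)) (0 + 2 *\<^sub>R u) * ennreal (iv 4 (0 + 2 *\<^sub>R u)) \<partial>lborel)"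
    unfolding JJ_def by (rule nn_integral_affine4[OF m]) simp
  also have "(\<lambda>u. indicator (- ball (0::real^4) (2*R)) (0 + 2 *\<^sub>R u) * ennreal (iv 4 (0 + 2 *\<^sub>R u)))
     = (\<lambda>u. ennreal (1/16) * (indicator (- ball 0 R) u * ennreal (iv 4 u)))"
  proof
    fix u :: "real^4"
    have i: "indicator (- ball (0::real^4) (2*R)) (0 + 2 *\<^sub>R u) = (indicator (- ball 0 R) u :: ennreal)"
      by (simp add: indicator_def dist_norm)
    have v: "iv 4 (0 + 2 *\<^sub>R u) = 1/16 * iv 4 u" by (simp add: iv_scale)
    show "indicator (- ball (0::real^4) (2*R)) (0 + 2 *\<^sub>R u) * ennreal (iv 4 (0 + 2 *\<^sub>R u))
       = ennreal (1/16) * (indicator (- ball 0 R) u * ennreal (iv 4 u))"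
    proof -
      have e: "ennreal (1/16 * iv 4 u) = ennreal (1/16) * ennreal (iv 4 u)" by (rule ennreal_mult') simp
      show ?thesis unfolding i v e by (simp only: mult.left_commute)
    qed
  qed
  also have "(\<integral>\<^sup>+u. ennreal (1/16) * (indicator (- ball 0 R) u * ennreal (iv 4 u)) \<partial>lborel) = ennreal (1/16) * JJ R"
    unfolding JJ_def by (rule nn_integral_cmult) measurable
  finally have "JJ (2*R) = 16 * ennreal (1/16) * JJ R" by (simp add: mult.assoc)
  moreover have c16: "(16::ennreal) * ennreal (1/16) = 1" using ennreal_mult[of 16 "1/16"] by simp
  ultimately show ?thesis by simp
qed

lemma annulus_pos:
  assumes "R > 0"
  shows "(\<integral>\<^sup>+t. indicator (ball 0 (2*R) - ball (0::real^4) R) t * ennreal (iv 4 t) \<partial>lborel) > 0"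
proof -
  define c :: "real^4" where "c = (3/2*R) *\<^sub>R e1"
  have nc: "norm c = 3/2*R" using assms by (simp add: c_def norm_e1)
  have "(\<integral>\<^sup>+t. indicator (cball c (R/4)) t * ennreal (1/(2*R)^4) \<partial>lborel)
     \<le> (\<integral>\<^sup>+t. indicator (ball 0 (2*R) - ball (0::real^4) R) t * ennreal (iv 4 t) \<partial>lborel)"
  proof (intro nn_integral_mono)
    fix t :: "real^4"
    show "indicator (cball c (R/4)) t * ennreal (1/(2*R)^4) \<le> indicator (ball 0 (2*R) - ball (0::real^4) R) t * ennreal (iv 4 t)"
    proof (cases "t \<in> cball c (R/4)")
      case True
      then have d: "norm (t - c) \<le> R/4" by (simp add: dist_norm norm_minus_commute)
      have n1: "norm t \<le> norm c + norm (t - c)" using norm_triangle_sub[of t c] by simp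
      have n2: "norm c \<le> norm t + norm (t - c)" using norm_triangle_sub[of c t] by (simp add: norm_minus_commute)
      have lo: "R \<le> norm t" "norm t < 2*R" using n1 n2 d nc assms by linarith+
      have "1/(2*R)^4 \<le> 1 / norm t ^ 4" using lo assms by (intro inv_pow_le) auto
      then have "ennreal (1/(2*R)^4) \<le> ennreal (iv 4 t)" by (intro ennreal_leI) (simp add: iv_eq)
      then show ?thesis using True lo by (simp add: indicator_def dist_norm)
    qed (simp)
  qed
  note le = this
  have eq: "(\<integral>\<^sup>+t. indicator (cball c (R/4)) t * ennreal (1/(2*R)^4) \<partial>lborel) = ennreal (1/(2*R)^4) * ennreal (V4 * (R/4)^4)"
    using assms by (subst nn_integral_indicator_c) (simp_all add: emeasure_cball4)
  have pos: "ennreal (1/(2*R)^4) * ennreal (V4 * (R/4)^4) > 0"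
    using assms V4_pos by (simp add: ennreal_zero_less_mult_iff)
  have "0 < (\<integral>\<^sup>+t. indicator (cball c (R/4)) t * ennreal (1/(2*R)^4) \<partial>lborel)" using eq pos by simp
  then show ?thesis using le by (rule order_less_le_trans)
qed

lemma JJ_infinite:
  assumes "R > 0" shows "JJ R = \<infinity>"
proof (rule ccontr)
  assume fin: "JJ R \<noteq> \<infinity>"
  define A where "A = (\<integral>\<^sup>+t. indicator (ball 0 (2*R) - ball (0::real^4) R) t * ennreal (iv 4 t) \<partial>lborel)"
  have "JJ R = (\<integral>\<^sup>+t. indicator (ball 0 (2*R) - ball (0::real^4) R) t * ennreal (iv 4 t)
       + indicator (- ball (0::real^4) (2*R)) t * ennreal (iv 4 t) \<partial>lborel)"
    unfolding JJ_def
  proof (intro nn_integral_cong)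
    fix t :: "real^4"
    show "indicator (- ball 0 R) t * ennreal (iv 4 t) = indicator (ball 0 (2*R) - ball (0::real^4) R) t * ennreal (iv 4 t)
       + indicator (- ball (0::real^4) (2*R)) t * ennreal (iv 4 t)"
      using assms by (simp add: indicator_def dist_norm)
  qed
  also have "\<dots> = A + JJ (2*R)"
    unfolding A_def JJ_def by (rule nn_integral_add) measurable
  also have "JJ (2*R) = JJ R" using JJ_scale[OF assms] .
  finally have "JJ R = A + JJ R" .
  then have "JJ R + 0 = JJ R + A" by (metis add.commute add.right_neutral)
  then have "A = 0" using fin by (simp add: ennreal_add_left_cancel)
  then show False using annulus_pos[OF assms] unfolding A_def by simp
qed

lemma prop_lb:
  assumes "a \<noteq> b" "norm (a - b) \<le> D" shows "1/D^2 \<le> propagator a b"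
  unfolding propagator_def using assms by (intro inv_pow_le) auto

lemma chainP_prod:
  assumes "w \<noteq> []"
  shows "chainP w x z = (\<Prod>i<length w. letter_weight (w!i) (x i) * propagator (x i) (if Suc i < length w then x (Suc i) else z))"
proof -
  obtain m where m: "length w = Suc m" using assms by (cases w) auto
  have "(\<Prod>i<length w. propagator (x i) (if Suc i < length w then x (Suc i) else z))
      = (\<Prod>i<m. propagator (x i) (x (Suc i))) * propagator (x m) z"
    unfolding m by (simp add: lessThan_Suc)
  then show ?thesis unfolding chainP_def prod.distrib using m by simp
qed

lemma V0_lb:
  assumes l: "l \<noteq> L2" and p: "norm p \<ge> 2*Bq + 2" and B: "Bq \<ge> 1" and q: "norm q \<le> Bq"
  shows "1/16 * iv 4 p \<le> letter_weight l p * propagator p q"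
proof -
  define r where "r = norm p"
  have r: "r \<ge> 4" "r > Bq" using p B by (auto simp: r_def)
  have ne: "p \<noteq> 0" "p \<noteq> e1" "p \<noteq> q" using r q norm_e1 by (auto simp: r_def)
  have d0: "norm (p - 0) \<le> 2*r" using r by (simp add: r_def)
  have d1: "norm (p - e1) \<le> 2*r" using norm_triangle_ineq4[of p e1] norm_e1 r by (simp add: r_def)
  have dq: "norm (p - q) \<le> 2*r" using norm_triangle_ineq4[of p q] q r by (simp add: r_def)
  have lw: "1/(2*r)^2 \<le> letter_weight l p"
    using l prop_lb[OF ne(1) d0] prop_lb[OF ne(2) d1] by (cases l) auto
  have pq: "1/(2*r)^2 \<le> propagator p q" using prop_lb[OF ne(3) dq] .
  have "1/16 * iv 4 p = 1/(2*r)^2 * (1/(2*r)^2)"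
    by (simp add: iv_eq r_def power_mult_distrib eval_nat_numeral field_simps)
  also have "\<dots> \<le> letter_weight l p * propagator p q"
    using lw pq lw_nonneg[of l p] by (intro mult_mono) auto
  finally show ?thesis .
qed

lemma Vi_lb:
  assumes ne: "p \<noteq> 0" "p \<noteq> e1" "p \<noteq> q" and n: "norm p \<le> Bq" "norm q \<le> Bq" and B: "Bq \<ge> 1"
    and D: "D = 2*Bq + 2"
  shows "(1/D^2)^3 \<le> letter_weight l p * propagator p q"
proof -
  have D1: "D \<ge> 1" using B D by simp
  have c: "1/D^2 \<le> 1" using D1 by (simp add: field_simps)
  have c0: "0 \<le> 1/D^2" by simp
  have d0: "norm (p - 0) \<le> D" using n B D by simp
  have d1: "norm (p - e1) \<le> D" using norm_triangle_ineq4[of p e1] norm_e1 n B D by simp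
  have dq: "norm (p - q) \<le> D" using norm_triangle_ineq4[of p q] n B D by simp
  note P0 = prop_lb[OF ne(1) d0] and P1 = prop_lb[OF ne(2) d1] and Pq = prop_lb[OF ne(3) dq]
  have lw: "(1/D^2)^2 \<le> letter_weight l p"
  proof (cases l)
    case L0
    have "(1/D^2)^2 = (1/D^2) * (1/D^2)" by (rule power2_eq_square)
    also have "\<dots> \<le> 1/D^2" by (rule mult_left_le_one_le[OF c0 c0 c])
    finally have "(1/D^2)^2 \<le> 1/D^2" .
    then show ?thesis using L0 P0 by simp
  next
    case L1
    have "(1/D^2)^2 = (1/D^2) * (1/D^2)" by (rule power2_eq_square)
    also have "\<dots> \<le> 1/D^2" by (rule mult_left_le_one_le[OF c0 c0 c])
    finally have "(1/D^2)^2 \<le> 1/D^2" .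
    then show ?thesis using L1 P1 by simp
  next
    case L2
    have "(1/D^2)^2 = 1/D^2 * (1/D^2)" by (simp add: power2_eq_square)
    also have "\<dots> \<le> propagator p 0 * propagator p e1" using P0 P1 c0 prop_nonneg[of p 0] by (intro mult_mono) auto
    finally show ?thesis using L2 by simp
  qed
  have "(1/D^2)^3 = (1/D^2)^2 * (1/D^2)" by (simp add: power3_eq_cube power2_eq_square)
  also have "\<dots> \<le> letter_weight l p * propagator p q" using lw Pq c0 lw_nonneg[of l p] by (intro mult_mono) auto
  finally show ?thesis .
qed




lemma prod_mono_enn: "(\<And>i. i \<in> A \<Longrightarrow> (f i :: ennreal) \<le> g i) \<Longrightarrow> prod f A \<le> prod g A"
proof (induction A rule: infinite_finite_induct)
  case (insert a A)
  then show ?case by (simp add: mult_mono)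
qed simp_all

lemma pointwise_lower:
  fixes w :: "letter list" and z :: "real^4" and x :: "nat \<Rightarrow> real^4"
  assumes w: "w \<noteq> []" and h: "w ! 0 \<noteq> L2"
  defines "n \<equiv> length w"
  defines "B \<equiv> norm z + 3 * real n + 3"
  defines "D \<equiv> 2 * B + 2"
  defines "R \<equiv> D + 1"
  defines "cc \<equiv> (\<lambda>i::nat. (norm z + 2 + 3 * real i) *\<^sub>R e1)"
  defines "d \<equiv> (1/D^2)^3"
  defines "fd \<equiv> (\<lambda>i::nat. \<lambda>t::real^4. if i = 0 then ennreal (1/16) * (indicator (- ball 0 R) t * ennreal (iv 4 t))
      else ennreal d * indicator (cball (cc i) 1) t)"
  shows "(\<Prod>i<n. fd i (x i)) \<le> ennreal (chainP w x z)"
proof (cases "x 0 \<notin> ball 0 R \<and> (\<forall>i\<in>{1..<n}. x i \<in> cball (cc i) 1)")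
  case True
  have B1: "B \<ge> 1" unfolding B_def by simp
  have ncc: "norm (cc i) = norm z + 2 + 3 * real i" for i
    unfolding cc_def by (simp add: norm_e1)
  have reg: "norm (x i) \<le> B \<and> norm z + 4 \<le> norm (x i) \<and> norm (x i - cc i) \<le> 1" if "1 \<le> i" "i < n" for i
  proof -
    have xi: "x i \<in> cball (cc i) 1" using True that by auto
    have d: "norm (x i - cc i) \<le> 1" using xi by (simp add: dist_norm norm_minus_commute)
    have t1: "norm (x i) \<le> norm (cc i) + norm (x i - cc i)" using norm_triangle_sub[of "x i" "cc i"] by simp
    have t2: "norm (cc i) \<le> norm (x i) + norm (x i - cc i)" using norm_triangle_sub[of "cc i" "x i"] by (simp add: norm_minus_commute)
    have "real i \<le> real n - 1" using that by linarith
    moreover have "1 \<le> real i" using that by simp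
    ultimately show ?thesis using t1 t2 d ncc[of i] unfolding B_def by linarith
  qed
  have x0: "norm (x 0) \<ge> R" using True by (simp add: dist_norm)
  define nx where "nx i = (if Suc i < n then x (Suc i) else z)" for i
  have nxB: "norm (nx i) \<le> B" if "i < n" for i
    using reg[of "Suc i"] that B1 unfolding nx_def B_def by auto
  have each: "fd i (x i) \<le> ennreal (letter_weight (w!i) (x i) * propagator (x i) (nx i))" if "i < n" for i
  proof (cases "i = 0")
    case True
    have "1/16 * iv 4 (x 0) \<le> letter_weight (w!0) (x 0) * propagator (x 0) (nx 0)"
      using h x0 B1 nxB[of 0] that True by (intro V0_lb) (auto simp: R_def D_def)
    then have "ennreal (1/16 * iv 4 (x 0)) \<le> ennreal (letter_weight (w!0) (x 0) * propagator (x 0) (nx 0))"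
      by (rule ennreal_leI)
    moreover have "fd 0 (x 0) = ennreal (1/16 * iv 4 (x 0))"
    proof -
      have e: "ennreal (1/16 * iv 4 (x 0)) = ennreal (1/16) * ennreal (iv 4 (x 0))" by (rule ennreal_mult') simp
      show ?thesis unfolding e using x0 by (simp add: fd_def indicator_def dist_norm)
    qed
    ultimately show ?thesis using True by simp
  next
    case False
    have ri: "norm (x i) \<le> B" "norm z + 4 \<le> norm (x i)" "norm (x i - cc i) \<le> 1" using reg[of i] False that by auto
    have nx4: "norm (x i) \<ge> 4" using ri(2) norm_ge_zero[of z] by linarith
    have ne0: "x i \<noteq> 0" using nx4 by auto
    have ne1: "x i \<noteq> e1" using nx4 norm_e1 by auto
    have neq: "x i \<noteq> nx i"
    proof (cases "Suc i < n")
      case True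
      have rs: "norm (x (Suc i) - cc (Suc i)) \<le> 1" using reg[of "Suc i"] True by auto
      have "cc (Suc i) - cc i = 3 *\<^sub>R e1" unfolding cc_def scaleR_left_diff_distrib[symmetric] by simp
      then have "norm (cc (Suc i) - cc i) = 3" by (simp add: norm_e1)
      moreover have "norm (cc (Suc i) - cc i) \<le> norm (x (Suc i) - cc (Suc i)) + norm (x i - cc i) + norm (x (Suc i) - x i)"
      proof -
        have "cc (Suc i) - cc i = (x (Suc i) - x i) - (x (Suc i) - cc (Suc i)) + (x i - cc i)" by (simp add: algebra_simps)
        then have "norm (cc (Suc i) - cc i) \<le> norm ((x (Suc i) - x i) - (x (Suc i) - cc (Suc i))) + norm (x i - cc i)"
          by (metis norm_triangle_ineq)
        also have "\<dots> \<le> norm (x (Suc i) - x i) + norm (x (Suc i) - cc (Suc i)) + norm (x i - cc i)"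
          by (intro add_right_mono norm_triangle_ineq4)
        finally show ?thesis by simp
      qed
      ultimately have "norm (x (Suc i) - x i) \<ge> 1" using rs ri by linarith
      then show ?thesis using True unfolding nx_def by auto
    next
      case False
      then show ?thesis using ri unfolding nx_def by auto
    qed
    have "d \<le> letter_weight (w!i) (x i) * propagator (x i) (nx i)"
      unfolding d_def by (rule Vi_lb[OF ne0 ne1 neq ri(1) nxB[OF that] B1 meta_eq_to_obj_eq[OF D_def]])
    moreover have "fd i (x i) = ennreal d"
      using False True that by (simp add: fd_def indicator_def)
    ultimately show ?thesis by (simp add: ennreal_leI)
  qed
  have "(\<Prod>i<n. fd i (x i)) \<le> (\<Prod>i<n. ennreal (letter_weight (w!i) (x i) * propagator (x i) (nx i)))"
    by (intro prod_mono_enn each) simp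
  also have "\<dots> = ennreal (\<Prod>i<n. letter_weight (w!i) (x i) * propagator (x i) (nx i))"
    by (intro prod_ennreal mult_nonneg_nonneg lw_nonneg prop_nonneg)
  also have "\<dots> = ennreal (chainP w x z)"
    using chainP_prod[OF w, of x z] unfolding nx_def n_def by simp
  finally show ?thesis .
next
  case False
  note F = this
  then obtain i where i: "i < n" "fd i (x i) = 0"
  proof -
    assume r: "\<And>i. i < n \<Longrightarrow> fd i (x i) = 0 \<Longrightarrow> thesis"
    show thesis
    proof (cases "x 0 \<in> ball 0 R")
      case True
      then show thesis using w by (intro r[of 0]) (auto simp: fd_def n_def)
    next
      case False
      then obtain j where "j \<in> {1..<n}" "x j \<notin> cball (cc j) 1" using F by auto
      then show thesis by (intro r[of j]) (auto simp: fd_def)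
    qed
  qed
  have "(\<Prod>i<n. fd i (x i)) = 0" using i by (subst ennreal_prod_eq_0) auto
  then show ?thesis by (metis zero_le)
qed

lemma seq_integral_eq:
  assumes w: "w \<noteq> []"
  shows "seq_integral w z = ennreal (1/pi^(2*length w)) * (\<integral>\<^sup>+x. ennreal (chainP w x z) \<partial>PiM {..<length w} (\<lambda>_. lborel))"
proof -
  have "seq_integral w z = (\<integral>\<^sup>+x. ennreal (1/pi^(2*length w)) * ennreal (chainP w x z) \<partial>PiM {..<length w} (\<lambda>_. lborel))"
    unfolding seq_integral_def
  proof (intro nn_integral_cong)
    fix x :: "nat \<Rightarrow> real^4"
    have "seq_integrand w z x = 1/pi^(2*length w) * chainP w x z"
      by (simp add: seq_integrand_def chainP_def)
    then show "ennreal (seq_integrand w z x) = ennreal (1/pi^(2*length w)) * ennreal (chainP w x z)"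
      by (simp only:) (rule ennreal_mult'; simp)
  qed
  also have "\<dots> = ennreal (1/pi^(2*length w)) * (\<integral>\<^sup>+x. ennreal (chainP w x z) \<partial>PiM {..<length w} (\<lambda>_. lborel))"
    by (rule nn_integral_cmult[OF chainP_meas[OF w order_refl, THEN measurable_compose[OF _ measurable_ennreal]]])
  finally show ?thesis .
qed

lemma converge:
  assumes w: "w \<noteq> []" and h: "hd w = L2" and z: "z \<noteq> 0" "z \<noteq> e1"
  shows "seq_integral w z < \<infinity>"
proof -
  obtain C where C: "C < \<infinity>" and b: "\<And>y. y \<noteq> 0 \<Longrightarrow> y \<noteq> e1 \<Longrightarrow>
     (\<integral>\<^sup>+x. ennreal (chainP w x y) \<partial>PiM {..<length w} (\<lambda>_. lborel)) \<le> C * ennreal (gg y)"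
    using chain_bound[OF w h] by blast
  have "seq_integral w z \<le> ennreal (1/pi^(2*length w)) * (C * ennreal (gg z))"
    unfolding seq_integral_eq[OF w] by (intro mult_left_mono b z) simp
  also have "\<dots> < \<infinity>" using C by (simp add: ennreal_mult_less_top)
  finally show ?thesis .
qed

lemma diverge:
  fixes w :: "letter list" and z :: "real^4"
  assumes w: "w \<noteq> []" and h: "w ! 0 \<noteq> L2"
  defines "n \<equiv> length w"
  defines "B \<equiv> norm z + 3 * real n + 3"
  defines "D \<equiv> 2 * B + 2"
  defines "R \<equiv> D + 1"
  defines "cc \<equiv> (\<lambda>i::nat. (norm z + 2 + 3 * real i) *\<^sub>R e1)"
  defines "d \<equiv> (1/D^2)^3"
  defines "fd \<equiv> (\<lambda>i::nat. \<lambda>t::real^4. if i = 0 then ennreal (1/16) * (indicator (- ball 0 R) t * ennreal (iv 4 t))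
      else ennreal d * indicator (cball (cc i) 1) t)"
  shows "seq_integral w z = \<infinity>"
proof -
  obtain m where m: "n = Suc m" using w unfolding n_def by (cases w) auto
  have pw: "(\<Prod>i<n. fd i (x i)) \<le> ennreal (chainP w x z)" for x
    unfolding fd_def d_def cc_def R_def D_def B_def n_def by (rule pointwise_lower[OF w h])
  have B1: "B \<ge> 1" unfolding B_def by simp
  have Rpos: "R > 0" using B1 unfolding R_def D_def by simp
  have dpos: "d > 0" using B1 unfolding d_def D_def by simp
  have fdm: "fd i \<in> borel_measurable borel" for i unfolding fd_def by measurable
  have "(\<integral>\<^sup>+x. (\<Prod>i<n. fd i (x i)) \<partial>PiM {..<n} (\<lambda>_. lborel :: (real^4) measure)) = (\<Prod>i<n. integral\<^sup>N lborel (fd i))"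
    by (rule P4.product_nn_integral_prod) (auto intro: fdm)
  also have "\<dots> = integral\<^sup>N lborel (fd 0) * (\<Prod>i<m. integral\<^sup>N lborel (fd (Suc i)))"
    unfolding m by (rule prod.lessThan_Suc_shift)
  also have "integral\<^sup>N lborel (fd 0) = \<infinity>"
  proof -
    have "integral\<^sup>N lborel (fd 0) = ennreal (1/16) * JJ R"
      unfolding fd_def JJ_def by simp (rule nn_integral_cmult, measurable)
    then show ?thesis using JJ_infinite[OF Rpos] by (simp add: ennreal_mult_top)
  qed
  also have "(\<Prod>i<m. integral\<^sup>N lborel (fd (Suc i))) = (\<Prod>i<m. ennreal (d * V4))"
  proof (intro prod.cong refl)
    fix i
    have "integral\<^sup>N lborel (fd (Suc i)) = ennreal d * emeasure lborel (cball (cc (Suc i)) 1)"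
      unfolding fd_def by simp (rule nn_integral_cmult_indicator, simp)
    also have "\<dots> = ennreal (d * V4)" using dpos V4_pos by (simp add: emeasure_cball4 ennreal_mult')
    finally show "integral\<^sup>N lborel (fd (Suc i)) = ennreal (d * V4)" .
  qed
  also have "(\<Prod>i<m. ennreal (d * V4)) = ennreal ((d * V4)^m)"
    using dpos V4_pos by (simp add: ennreal_power)
  also have "\<infinity> * ennreal ((d * V4)^m) = \<infinity>"
    using dpos V4_pos by (simp add: ennreal_top_mult)
  finally have inf: "(\<integral>\<^sup>+x. (\<Prod>i<n. fd i (x i)) \<partial>PiM {..<n} (\<lambda>_. lborel :: (real^4) measure)) = \<infinity>" .
  have "\<infinity> \<le> (\<integral>\<^sup>+x. ennreal (chainP w x z) \<partial>PiM {..<n} (\<lambda>_. lborel))"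
    unfolding inf[symmetric] by (intro nn_integral_mono pw)
  then have "(\<integral>\<^sup>+x. ennreal (chainP w x z) \<partial>PiM {..<n} (\<lambda>_. lborel)) = \<infinity>"
    by (simp add: top_unique)
  then show ?thesis unfolding seq_integral_eq[OF w] n_def[symmetric] by (simp add: ennreal_mult_top)
qed

theorem mainTheorem7:
  fixes w :: "letter list" and z :: "real^4"
  assumes "w \<noteq> []" and "z \<noteq> 0" and "z \<noteq> e1"
  shows "seq_well_defined w z \<longleftrightarrow> hd w = L2"
proof
  assume "seq_well_defined w z"
  then have f: "seq_integral w z < \<infinity>" by (simp add: seq_well_defined_def)
  show "hd w = L2"
  proof (rule ccontr)
    assume "hd w \<noteq> L2"
    then have "w ! 0 \<noteq> L2" using assms(1) by (cases w) auto
    then have "seq_integral w z = \<infinity>" using diverge[OF assms(1)] by blast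
    then show False using f by simp
  qed
next
  assume "hd w = L2"
  then show "seq_well_defined w z"
    using converge[OF assms(1) _ assms(2,3)] by (simp add: seq_well_defined_def)
qed


end
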